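(* In the setting described in the context, suppose there is exactly one buffer pool ($L=1$). Then $M=e'$ and $G=(\lambda^* )'$, and moreover $M\eta q=\eta$ and $MC\,\mathrm{diag}(x^* )A'=e'$.
   Context: Let $I\ge1$, $J\ge I$; each activity $j\in\{1,\dots,J\}$ has a server $s(j)$ and a buffer $b(j)$ in $\{1,\dots,I\}$, with $s(j)=b(j)=j$ for $j\le I$. Let $A_{ij}=\mathbf1\{s(j)=i\}$, $C_{ij}=\mathbf1\{b(j)=i\}$, $\lambda^*\in(0,\infty)^I$, $\mu_j^*=\lambda^*_{s(j)}$, $R_{ij}=\mu_j^*C_{ij}$, $\eta>0$, $q\in(0,1)^I$ with $\sum q_i=1$, $\nu=\eta q$; assume there is a unique $x^*\in\mathbb{R}^J$ with $x^*_j=\min\{\lambda^*_j,\nu_j\}$ for $j\le I$, $Rx^*=\nu$, $Ax^*=e$, $x^*\ge0$. Activity $j$ is basic if $x_j^*>0$. Buffers $i,i'$ communicate directly if there are basic $j,j'$ with $b(j)=i$, $b(j')=i'$, $s(j)=s(j')$; they communicate if linked by a finite chain of directly communicating buffers; the equivalence classes are the buffer pools $\mathcal P_1,\dots,\mathcal P_L$. The server pools are $\mathcal S_l=\{k:\exists\text{ basic } j\text{ with } s(j)=k,\ b(j)\in\mathcal P_l\}$. $M$ is the $L\times I$ matrix $M_{li}=\mathbf 1\{i\in\mathcal P_l\}$, $G$ the $L\times I$ matrix $G_{lk}=\lambda^*_k\mathbf1\{k\in\mathcal S_l\}$, $e$ a vector of ones of appropriate dimension, and $\mathrm{diag}(x^*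 )$ the $J\times J$ diagonal matrix with diagonal $x^*$. *)

theory Defs
  imports Complex_Main
begin

text \<open>Indices: buffers and servers range over {1..I}, activities over {1..J}.
  Vectors are functions nat => real, matrices functions nat => nat => real.\<close>

definition Amat :: "(nat \<Rightarrow> nat) \<Rightarrow> nat \<Rightarrow> nat \<Rightarrow> real" where
  "Amat s i j = (if s j = i then 1 else 0)"

definition Cmat :: "(nat \<Rightarrow> nat) \<Rightarrow> nat \<Rightarrow> nat \<Rightarrow> real" where
  "Cmat b i j = (if b j = i then 1 else 0)"

definition Rmat :: "(nat \<Rightarrow> nat) \<Rightarrow> (nat \<Rightarrow> nat) \<Rightarrow> (nat \<Rightarrow> real) \<Rightarrow> nat \<Rightarrow> nat \<Rightarrow> real" where
  "Rmat s b lam i j = lam (s j) * Cmat b i j"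

definition feasible ::
  "nat \<Rightarrow> nat \<Rightarrow> (nat \<Rightarrow> nat) \<Rightarrow> (nat \<Rightarrow> nat) \<Rightarrow> (nat \<Rightarrow> real) \<Rightarrow> (nat \<Rightarrow> real) \<Rightarrow> (nat \<Rightarrow> real) \<Rightarrow> bool" where
  "feasible I J s b lam nu x \<longleftrightarrow>
     (\<forall>j\<in>{1..I}. x j = min (lam j) (nu j)) \<and>
     (\<forall>i\<in>{1..I}. (\<Sum>j=1..J. Rmat s b lam i j * x j) = nu i) \<and>
     (\<forall>i\<in>{1..I}. (\<Sum>j=1..J. Amat s i j * x j) = 1) \<and>
     (\<forall>j\<in>{1..J}. x j \<ge> 0)"

definition basic :: "(nat \<Rightarrow> real) \<Rightarrow> nat \<Rightarrow> bool" where
  "basic x j \<longleftrightarrow> x j > 0"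

definition dcomm :: "nat \<Rightarrow> (nat \<Rightarrow> nat) \<Rightarrow> (nat \<Rightarrow> nat) \<Rightarrow> (nat \<Rightarrow> real) \<Rightarrow> (nat \<times> nat) set" where
  "dcomm J s b x = {(i, i'). \<exists>j\<in>{1..J}. \<exists>j'\<in>{1..J}.
      basic x j \<and> basic x j' \<and> b j = i \<and> b j' = i' \<and> s j = s j'}"

definition comm :: "nat \<Rightarrow> nat \<Rightarrow> (nat \<Rightarrow> nat) \<Rightarrow> (nat \<Rightarrow> nat) \<Rightarrow> (nat \<Rightarrow> real) \<Rightarrow> (nat \<times> nat) set" where
  "comm I J s b x = (dcomm J s b x)\<^sup>* \<inter> ({1..I} \<times> {1..I})"

definition buffer_pools :: "nat \<Rightarrow> nat \<Rightarrow> (nat \<Rightarrow> nat) \<Rightarrow> (nat \<Rightarrow> nat) \<Rightarrow> (nat \<Rightarrow> real) \<Rightarrow> nat set set" where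
  "buffer_pools I J s b x = {1..I} // comm I J s b x"

definition server_pool :: "nat \<Rightarrow> (nat \<Rightarrow> nat) \<Rightarrow> (nat \<Rightarrow> nat) \<Rightarrow> (nat \<Rightarrow> real) \<Rightarrow> nat set \<Rightarrow> nat set" where
  "server_pool J s b x P = {k. \<exists>j\<in>{1..J}. basic x j \<and> s j = k \<and> b j \<in> P}"

text \<open>Rows of M and G, indexed by the buffer pool P itself.\<close>
definition Mmat :: "nat set \<Rightarrow> nat \<Rightarrow> real" where
  "Mmat P i = (if i \<in> P then 1 else 0)"

definition Gmat :: "nat \<Rightarrow> (nat \<Rightarrow> nat) \<Rightarrow> (nat \<Rightarrow> nat) \<Rightarrow> (nat \<Rightarrow> real) \<Rightarrow> (nat \<Rightarrow> real) \<Rightarrow> nat set \<Rightarrow> nat \<Rightarrow> real" where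
  "Gmat J s b x lam P k = (if k \<in> server_pool J s b x P then lam k else 0)"

end

theory Submission
  imports Defs
begin

theorem lemma4:
  fixes I J :: nat and s b :: "nat \<Rightarrow> nat" and lam q x :: "nat \<Rightarrow> real" and eta :: real
  assumes "I \<ge> 1" and "J \<ge> I"
    and "\<forall>j\<in>{1..J}. s j \<in> {1..I} \<and> b j \<in> {1..I}"
    and "\<forall>j\<in>{1..I}. s j = j \<and> b j = j"
    and "\<forall>i\<in>{1..I}. lam i > 0"
    and "eta > 0"
    and "\<forall>i\<in>{1..I}. 0 < q i \<and> q i < 1" and "(\<Sum>i=1..I. q i) = 1"
    and "feasible I J s b lam (\<lambda>i. eta * q i) x"
    and "\<forall>y. feasible I J s b lam (\<lambda>i. eta * q i) y \<longrightarrow> (\<forall>j\<in>{1..J}. y j = x j)"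
    and "card (buffer_pools I J s b x) = 1"
  shows "\<forall>P\<in>buffer_pools I J s b x.
           (\<forall>i\<in>{1..I}. Mmat P i = 1)
         \<and> (\<forall>k\<in>{1..I}. Gmat J s b x lam P k = lam k)
         \<and> (\<Sum>i=1..I. Mmat P i * (eta * q i)) = eta
         \<and> (\<forall>k\<in>{1..I}. (\<Sum>i=1..I. \<Sum>j=1..J. Mmat P i * Cmat b i j * x j * Amat s k j) = 1)"
proof
  fix P assume P: "P \<in> buffer_pools I J s b x"
  obtain Q where Q: "buffer_pools I J s b x = {Q}" using assms(11) card_1_singletonE by blast
  have memP: "i \<in> P" if i: "i \<in> {1..I}" for i
  proof -
    have "comm I J s b x `` {i} \<in> buffer_pools I J s b x"
      unfolding buffer_pools_def using i by (rule quotientI)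
    then have "P = comm I J s b x `` {i}" using P Q by auto
    moreover have "(i, i) \<in> comm I J s b x" unfolding comm_def using i by auto
    ultimately show ?thesis by auto
  qed
  have M1: "\<forall>i\<in>{1..I}. Mmat P i = 1" using memP by (simp add: Mmat_def)
  have feas: "\<forall>i\<in>{1..I}. (\<Sum>j=1..J. Amat s i j * x j) = 1" "\<forall>j\<in>{1..J}. x j \<ge> 0"
    using assms(9) unfolding feasible_def by auto
  have G: "\<forall>k\<in>{1..I}. Gmat J s b x lam P k = lam k"
  proof
    fix k assume k: "k \<in> {1..I}"
    have "\<exists>j\<in>{1..J}. s j = k \<and> x j > 0"
    proof (rule ccontr)
      assume "\<not> ?thesis"
      then have "\<forall>j\<in>{1..J}. Amat s k j * x j = 0"
        using feas(2) by (force simp: Amat_def)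
      then have "(\<Sum>j=1..J. Amat s k j * x j) = 0" by (intro sum.neutral) blast
      with feas(1) k show False by auto
    qed
    then obtain j where j: "j \<in> {1..J}" "s j = k" "x j > 0" by blast
    have "b j \<in> P" using memP assms(3) j(1) by blast
    then have "k \<in> server_pool J s b x P" unfolding server_pool_def basic_def using j by blast
    then show "Gmat J s b x lam P k = lam k" by (simp add: Gmat_def)
  qed
  have S: "(\<Sum>i=1..I. Mmat P i * (eta * q i)) = eta"
  proof -
    have "(\<Sum>i=1..I. Mmat P i * (eta * q i)) = (\<Sum>i=1..I. eta * q i)"
      using M1 by (intro sum.cong) auto
    also have "\<dots> = eta" using assms(8) by (simp add: sum_distrib_left[symmetric])
    finally show ?thesis .
  qed
  have L: "\<forall>k\<in>{1..I}. (\<Sum>i=1..I. \<Sum>j=1..J. Mmat P i * Cmat b i j * x j * Amat s k j) = 1"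
  proof
    fix k assume k: "k \<in> {1..I}"
    have "(\<Sum>i=1..I. \<Sum>j=1..J. Mmat P i * Cmat b i j * x j * Amat s k j)
        = (\<Sum>j=1..J. \<Sum>i=1..I. Cmat b i j * (x j * Amat s k j))"
      using M1 by (subst sum.swap) (intro sum.cong, auto)
    also have "\<dots> = (\<Sum>j=1..J. Amat s k j * x j)"
    proof (intro sum.cong refl)
      fix j assume j: "j \<in> {1..J}"
      have "(\<Sum>i=1..I. Cmat b i j * (x j * Amat s k j)) = (\<Sum>i\<in>{b j}. x j * Amat s k j)"
        using j assms(3) by (intro sum.mono_neutral_cong_right) (auto simp: Cmat_def)
      then show "(\<Sum>i=1..I. Cmat b i j * (x j * Amat s k j)) = Amat s k j * x j" by simp
    qed
    also have "\<dots> = 1" using feas(1) k by auto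
    finally show "(\<Sum>i=1..I. \<Sum>j=1..J. Mmat P i * Cmat b i j * x j * Amat s k j) = 1" .
  qed
  show "(\<forall>i\<in>{1..I}. Mmat P i = 1)
         \<and> (\<forall>k\<in>{1..I}. Gmat J s b x lam P k = lam k)
         \<and> (\<Sum>i=1..I. Mmat P i * (eta * q i)) = eta
         \<and> (\<forall>k\<in>{1..I}. (\<Sum>i=1..I. \<Sum>j=1..J. Mmat P i * Cmat b i j * x j * Amat s k j) = 1)"
    using M1 G S L by blast
qed

end
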